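(* Let $a$ and $c$ be coprime positive odd integers. Then for every integer $p\geq1$ and all $x,z\in\mathbb{R}$, $$ac^{p}S^{(5)}_{p}(a,c:x,z)+ca^{p}S^{(5)}_{p}(c,a:z,x)=-\frac{1}{2}\sum_{j=1}^{p}\binom{p-1}{j-1}a^{p+1-j}c^{j}\mathcal{E}_{p-j}(z)\mathcal{E}_{j-1}(x)+\mathcal{E}_{p}(az+cx).$$
   Context: $B_n(x)$ is the $n$th Bernoulli polynomial ($\frac{te^{xt}}{e^t-1}=\sum B_n(x)\frac{t^n}{n!}$) and $\mathcal{B}_n(x)=B_n(x-[x])$ the $n$th Bernoulli function ($[x]$ the largest integer $\le x$). $E_n(x)$ is the $n$th Euler polynomial ($\frac{2e^{xt}}{e^t+1}=\sum E_n(x)\frac{t^n}{n!}$), and the Euler function $\mathcal{E}_n$ ($n\ge0$) is defined by $\mathcal{E}_n(x)=E_n(x)$ for $0\le x<1$ and $\mathcal{E}_n(x+m)=(-1)^m\mathcal{E}_n(x)$ for $m\in\mathbb{Z}$. For positive integers $a,c$, an integer $p\ge1$ and real $x,z$, define $$S^{(5)}_{p}(a,c:x,z)=\sum_{\mu=0}^{c-1}(-1)^{\mu}\mathcal{E}_{p-1}\Big(a\frac{\mu+z}{c}+x\Big)\mathcal{B}_{1}\Big(\frac{\mu+z}{c}\Big).$$ *)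

theory Defs
  imports "HOL-Analysis.Analysis"
begin

(* Bernoulli numbers via te^{xt}/(e^t-1) at x=0: B_0 = 1, sum_{k<=n} C(n+1,k) B_k = 0 *)
fun bernoulli_num :: "nat \<Rightarrow> real" where
  "bernoulli_num n = (if n = 0 then 1 else
     - (\<Sum>k<n. real ((Suc n) choose k) * (if k < n then bernoulli_num k else 0)) / real (Suc n))"

definition bernoulli_poly :: "nat \<Rightarrow> real \<Rightarrow> real" where
  "bernoulli_poly n x = (\<Sum>k\<le>n. real (n choose k) * bernoulli_num k * x ^ (n - k))"

definition bernoulli_fun :: "nat \<Rightarrow> real \<Rightarrow> real" where
  "bernoulli_fun n x = bernoulli_poly n (x - of_int \<lfloor>x\<rfloor>)"

(* Euler polynomials from 2e^{xt}/(e^t+1): E_n(x) + sum_{k<=n} C(n,k) E_k(x) = 2 x^n *)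
fun euler_poly :: "nat \<Rightarrow> real \<Rightarrow> real" where
  "euler_poly n x = x ^ n -
     (\<Sum>k<n. real (n choose k) * (if k < n then euler_poly k x else 0)) / 2"

definition euler_fun :: "nat \<Rightarrow> real \<Rightarrow> real" where
  "euler_fun n x = (-1) powi \<lfloor>x\<rfloor> * euler_poly n (x - of_int \<lfloor>x\<rfloor>)"

definition S5 :: "nat \<Rightarrow> nat \<Rightarrow> nat \<Rightarrow> real \<Rightarrow> real \<Rightarrow> real" where
  "S5 p a c x z = (\<Sum>\<mu><c. (-1) ^ \<mu> *
      euler_fun (p - 1) (real a * ((real \<mu> + z) / real c) + x) *
      bernoulli_fun 1 ((real \<mu> + z) / real c))"

end

theory Submission
  imports Defs
begin


declare euler_poly.simps[simp del] bernoulli_num.simps[simp del]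

definition appell :: "(nat \<Rightarrow> real \<Rightarrow> real) \<Rightarrow> bool" where
  "appell f \<longleftrightarrow> (\<forall>n x h. f n (x + h) = (\<Sum>k\<le>n. real (n choose k) * f k x * h ^ (n - k)))"

lemma swap_tri:
  "(\<Sum>j\<le>(n::nat). \<Sum>i\<le>j. F i j) = (\<Sum>i\<le>n. \<Sum>s\<le>n - i. F i (i + s) :: real)"
proof (induction n)
  case 0 then show ?case by simp
next
  case (Suc n)
  have "(\<Sum>i\<le>Suc n. \<Sum>s\<le>Suc n - i. F i (i + s)) =
        (\<Sum>i\<le>n. \<Sum>s\<le>Suc (n - i). F i (i + s)) + F (Suc n) (Suc n)"
    by (simp add: Suc_diff_le)
  also have "\<dots> = (\<Sum>i\<le>n. (\<Sum>s\<le>n - i. F i (i + s)) + F i (Suc n)) + F (Suc n) (Suc n)"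
    by (intro arg_cong2[where f="(+)"] sum.cong refl) (simp add: Suc_diff_le)
  also have "\<dots> = (\<Sum>j\<le>Suc n. \<Sum>i\<le>j. F i j)"
    using Suc by (simp add: sum.distrib)
  finally show ?case by simp
qed

lemma sum_atMost_flip: "(\<Sum>s\<le>(N::nat). G s) = (\<Sum>s\<le>N. G (N - s) :: real)"
  by (rule sum.reindex_bij_witness[where i="\<lambda>s. N - s" and j="\<lambda>s. N - s"]) auto

lemma binom3:
  assumes "i + s \<le> n"
  shows "(n choose (i + s)) * ((i + s) choose i) = (n choose (n - s)) * ((n - s) choose i)"
proof -
  have "(n choose (i + s)) * ((i + s) choose i) = (n choose i) * ((n - i) choose s)"
    using choose_mult[of i "i+s" n] assms by simp
  moreover have "(n choose (n - s)) * ((n - s) choose i) = (n choose i) * ((n - i) choose (n - s - i))"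
    using choose_mult[of i "n-s" n] assms by simp
  moreover have "(n - i) choose (n - s - i) = (n - i) choose s"
    using binomial_symmetric[of s "n - i"] assms by (simp add: diff_diff_add add.commute)
  ultimately show ?thesis by simp
qed

lemma appell_conv:
  assumes "appell f"
  shows "appell (\<lambda>n x. \<Sum>j\<le>n. real (n choose j) * \<alpha> (n - j) * f j x)"
  unfolding appell_def
proof (intro allI)
  fix n x h
  have "(\<Sum>j\<le>n. real (n choose j) * \<alpha> (n - j) * f j (x + h)) =
        (\<Sum>j\<le>n. \<Sum>i\<le>j. real (n choose j) * \<alpha> (n - j) * (real (j choose i) * f i x * h ^ (j - i)))"
    using assms unfolding appell_def by (simp add: sum_distrib_left)
  also have "\<dots> = (\<Sum>i\<le>n. \<Sum>s\<le>n - i. real (n choose (i + s)) * \<alpha> (n - (i + s)) *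
                     (real ((i + s) choose i) * f i x * h ^ s))"
    by (subst swap_tri) simp
  also have "\<dots> = (\<Sum>i\<le>n. \<Sum>s\<le>n - i. real (n choose (n - s)) * h ^ s *
                     (real ((n - s) choose i) * \<alpha> (n - s - i) * f i x))"
  proof (intro sum.cong refl)
    fix i s assume "i \<in> {..n}" "s \<in> {..n - i}"
    then have "i + s \<le> n" by auto
    then have "real (n choose (i + s)) * real ((i + s) choose i) = real (n choose (n - s)) * real ((n - s) choose i)"
      using binom3 by (metis of_nat_mult)
    moreover have "n - (i + s) = n - s - i" by simp
    ultimately show "real (n choose (i + s)) * \<alpha> (n - (i + s)) * (real ((i + s) choose i) * f i x * h ^ s) =
       real (n choose (n - s)) * h ^ s * (real ((n - s) choose i) * \<alpha> (n - s - i) * f i x)"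
      by (metis (no_types, lifting) mult.commute mult.left_commute)
  qed
  also have "\<dots> = (\<Sum>i\<le>n. \<Sum>s\<le>n - i. real (n choose (i + s)) * h ^ (n - (i + s)) *
                     (real ((i + s) choose i) * \<alpha> (i + s - i) * f i x))"
  proof (rule sum.cong[OF refl])
    fix i assume "i \<in> {..n}"
    then have i: "i \<le> n" by auto
    show "(\<Sum>s\<le>n - i. real (n choose (n - s)) * h ^ s * (real ((n - s) choose i) * \<alpha> (n - s - i) * f i x)) =
          (\<Sum>s\<le>n - i. real (n choose (i + s)) * h ^ (n - (i + s)) * (real ((i + s) choose i) * \<alpha> (i + s - i) * f i x))"
      (is "(\<Sum>s\<le>n - i. ?L s) = (\<Sum>s\<le>n - i. ?R s)")
    proof -
      have "(\<Sum>s\<le>n - i. ?L s) = (\<Sum>s\<le>n - i. ?L (n - i - s))"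
        by (rule sum_atMost_flip)
      also have "\<dots> = (\<Sum>s\<le>n - i. ?R s)"
      proof (rule sum.cong[OF refl])
        fix s assume "s \<in> {..n - i}"
        then have "n - (n - i - s) = i + s" "n - i - s = n - (i + s)" "n - (n - i - s) - i = s"
          using i by auto
        then show "?L (n - i - s) = ?R s" by simp
      qed
      finally show ?thesis .
    qed
  qed
  also have "\<dots> = (\<Sum>m\<le>n. \<Sum>i\<le>m. real (n choose m) * h ^ (n - m) * (real (m choose i) * \<alpha> (m - i) * f i x))"
    by (subst swap_tri) simp
  also have "\<dots> = (\<Sum>m\<le>n. real (n choose m) * (\<Sum>j\<le>m. real (m choose j) * \<alpha> (m - j) * f j x) * h ^ (n - m))"
    by (simp add: sum_distrib_left sum_distrib_right mult_ac)
  finally show "(\<Sum>j\<le>n. real (n choose j) * \<alpha> (n - j) * f j (x + h)) =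
     (\<Sum>m\<le>n. real (n choose m) * (\<Sum>j\<le>m. real (m choose j) * \<alpha> (m - j) * f j x) * h ^ (n - m))" .
qed

lemma appell_pow: "appell (\<lambda>n x. x ^ n)"
  unfolding appell_def by (simp add: binomial_ring mult_ac)




lemma euler_rec: "euler_poly n x = x ^ n - (\<Sum>k<n. real (n choose k) * euler_poly k x) / 2"
  apply (subst euler_poly.simps)
  apply (rule arg_cong[where f="\<lambda>s. x ^ n - s / 2"])
  apply (rule sum.cong)
   apply auto
  done

lemma euler_rec2: "(\<Sum>k\<le>n. real (n choose k) * euler_poly k x) = 2 * x ^ n - euler_poly n x"
  using euler_rec[of n x] by (simp add: lessThan_Suc_atMost[symmetric])

lemma appell_unique:
  assumes ap: "appell f" and fe: "\<And>n t. f n (t + 1) + f n t = 2 * t ^ n"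
  shows "f n t = euler_poly n t"
proof (induction n arbitrary: t rule: less_induct)
  case (less n)
  have "f n (t + 1) = (\<Sum>k\<le>n. real (n choose k) * f k t * 1 ^ (n - k))"
    using ap unfolding appell_def by blast
  also have "\<dots> = (\<Sum>k<n. real (n choose k) * euler_poly k t) + f n t"
    using less by (simp add: lessThan_Suc_atMost[symmetric])
  finally have "f n (t + 1) = (\<Sum>k<n. real (n choose k) * euler_poly k t) + f n t" .
  with fe[of n t] have "f n t = t ^ n - (\<Sum>k<n. real (n choose k) * euler_poly k t) / 2"
    by simp
  then show ?case using euler_rec[of n t] by simp
qed

definition Qe :: "nat \<Rightarrow> real \<Rightarrow> real" where
  "Qe n x = (\<Sum>j\<le>n. real (n choose j) * euler_poly (n - j) 0 * x ^ j)"

lemma appell_Qe: "appell Qe"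
proof -
  have "appell (\<lambda>n x. \<Sum>j\<le>n. real (n choose j) * euler_poly (n - j) 0 * x ^ j)"
    by (rule appell_conv[OF appell_pow])
  then show ?thesis unfolding Qe_def[abs_def] .
qed

lemma Qe0: "Qe k 0 = euler_poly k 0"
  unfolding Qe_def by (simp add: sum.atMost_shift)

lemma Qe1: "Qe k 1 = (\<Sum>i\<le>k. real (k choose i) * euler_poly i 0)"
proof -
  have "Qe k 1 = (\<Sum>j\<le>k. real (k choose j) * euler_poly (k - j) 0)"
    unfolding Qe_def by simp
  also have "\<dots> = (\<Sum>j\<le>k. real (k choose (k - j)) * euler_poly (k - (k - j)) 0)"
    by (rule sum_atMost_flip)
  also have "\<dots> = (\<Sum>i\<le>k. real (k choose i) * euler_poly i 0)"
    by (intro sum.cong refl) (simp add: binomial_symmetric[symmetric])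
  finally show ?thesis .
qed

lemma Qe_fe: "Qe n (t + 1) + Qe n t = 2 * t ^ n"
proof -
  have "Qe n (1 + t) = (\<Sum>k\<le>n. real (n choose k) * Qe k 1 * t ^ (n - k))"
    using appell_Qe unfolding appell_def by blast
  moreover have "Qe n (0 + t) = (\<Sum>k\<le>n. real (n choose k) * Qe k 0 * t ^ (n - k))"
    using appell_Qe unfolding appell_def by blast
  ultimately have "Qe n (t + 1) + Qe n t = (\<Sum>k\<le>n. real (n choose k) * (Qe k 1 + Qe k 0) * t ^ (n - k))"
    by (simp add: sum.distrib[symmetric] algebra_simps)
  also have "\<dots> = (\<Sum>k\<le>n. real (n choose k) * (2 * 0 ^ k) * t ^ (n - k))"
    by (intro sum.cong refl) (simp add: Qe1 Qe0 euler_rec2)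
  also have "\<dots> = 2 * t ^ n"
    by (simp add: sum.atMost_shift)
  finally show ?thesis .
qed

lemma Qe_eq: "Qe n t = euler_poly n t"
  by (rule appell_unique[OF appell_Qe Qe_fe])

lemma appell_euler: "appell euler_poly"
  using appell_Qe by (simp add: Qe_eq[abs_def])

lemma euler_shift:
  "euler_poly n (x + h) = (\<Sum>k\<le>n. real (n choose k) * euler_poly k x * h ^ (n - k))"
  using appell_euler unfolding appell_def by blast

lemma euler_fe: "euler_poly n (x + 1) + euler_poly n x = 2 * x ^ n"
  by (simp add: Qe_eq[symmetric] Qe_fe)

lemma euler_1: "n \<ge> 1 \<Longrightarrow> euler_poly n 1 = - euler_poly n 0"
  using euler_fe[of n 0] by (cases n) auto

lemma euler_0 [simp]: "euler_poly 0 x = 1"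
  by (subst euler_poly.simps) simp

lemma euler_mult_poly:
  assumes m: "odd m"
  shows "(\<Sum>k<m. (-1) ^ k * euler_poly n ((t + real k) / real m)) = euler_poly n t / real m ^ n"
proof -
  have m0: "real m > 0" using m by (cases m) auto
  define G where "G n t = real m ^ n * (\<Sum>k<m. (-1) ^ k * euler_poly n ((t + real k) / real m))" for n t
  have ap: "appell G"
    unfolding appell_def
  proof (intro allI)
    fix n x h
    have "G n (x + h) = real m ^ n * (\<Sum>k<m. (-1) ^ k * euler_poly n ((x + real k) / real m + h / real m))"
      unfolding G_def by (simp add: add_divide_distrib algebra_simps)
    also have "\<dots> = real m ^ n * (\<Sum>k<m. (-1) ^ k * (\<Sum>j\<le>n. real (n choose j) * euler_poly j ((x + real k) / real m) * (h / real m) ^ (n - j)))"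
      by (simp add: euler_shift)
    also have "\<dots> = (\<Sum>j\<le>n. real (n choose j) * G j x * h ^ (n - j))"
    proof -
      have pw: "real m ^ n * ((h / real m) ^ (n - j) * y) = real m ^ j * (h ^ (n - j) * y)" if "j \<le> n" for j y
      proof -
        have "real m ^ n = real m ^ j * real m ^ (n - j)" using that by (simp add: power_add[symmetric])
        then show ?thesis using m0 by (simp add: power_divide)
      qed
      then show ?thesis
        unfolding G_def
        apply (simp add: sum_distrib_left sum_distrib_right sum.swap[where A="{..<m}"])
        apply (rule sum.cong[OF refl])
        apply (rule sum.cong[OF refl])
        subgoal for j k using pw[of j "(-1) ^ k * euler_poly j ((x + real k) / real m)"]
          by (simp add: mult_ac)
        done
    qed
    finally show "G n (x + h) = (\<Sum>j\<le>n. real (n choose j) * G j x * h ^ (n - j))" .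
  qed
  have fe: "G n (t + 1) + G n t = 2 * t ^ n" for n t
  proof -
    define u where "u k = (-1) ^ k * euler_poly n ((t + real k) / real m)" for k
    have "(\<Sum>k<m. (-1) ^ k * euler_poly n ((t + 1 + real k) / real m)) = - (\<Sum>k<m. u (Suc k))"
      unfolding u_def by (simp add: sum_negf[symmetric] add_ac)
    then have "(\<Sum>k<m. (-1) ^ k * euler_poly n ((t + 1 + real k) / real m)) + (\<Sum>k<m. u k) = u 0 - u m"
      using sum_lessThan_telescope[of u m] by (simp add: sum_subtractf)
    moreover have "u 0 - u m = 2 * (t / real m) ^ n"
    proof -
      have "(t + real m) / real m = t / real m + 1" using m0 by (simp add: field_simps)
      then show ?thesis unfolding u_def using m euler_fe[of n "t / real m"] by simp
    qed
    ultimately show ?thesis unfolding G_def u_def using m0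
      by (simp add: algebra_simps power_divide flip: distrib_left)
  qed
  have "G n t = euler_poly n t" by (rule appell_unique[OF ap fe])
  then show ?thesis unfolding G_def using m0 by (simp add: field_simps)
qed




lemma m1_powi: "(-1::real) powi m = (if even m then 1 else -1)"
proof (cases m rule: int_cases)
  case (nonneg k) then show ?thesis by simp
next
  case (neg k) then show ?thesis by (simp add: power_int_minus)
qed

lemma m1_powi_add: "(-1::real) powi (m + n) = (-1) powi m * (-1) powi n"
  by (rule power_int_add) simp

lemma m1_powi_of_nat [simp]: "(-1::real) powi (int k) = (-1) ^ k"
  by simp

lemma m1_powi_neg [simp]: "(-1::real) powi (- m) = (-1) powi m"
  by (simp add: m1_powi)

lemma m1_powi_1 [simp]: "(-1::real) powi 1 = -1"
  by simp

lemma m1_powi_sq: "(-1::real) powi m * (-1) powi m = 1"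
  by (simp add: m1_powi)

lemma ef_shift_int: "euler_fun n (y + of_int m) = (-1) powi m * euler_fun n y"
  unfolding euler_fun_def by (simp add: m1_powi_add)

lemma ef_shift_1: "euler_fun n (y + 1) = - euler_fun n y"
  using ef_shift_int[of n y 1] by simp

lemma ef_shift_nat: "euler_fun n (y + real k) = (-1) ^ k * euler_fun n y"
  using ef_shift_int[of n y "int k"] by simp

lemma ef_unit: "0 \<le> y \<Longrightarrow> y < 1 \<Longrightarrow> euler_fun n y = euler_poly n y"
proof -
  assume "0 \<le> y" "y < 1"
  then have "\<lfloor>y\<rfloor> = 0" by (simp add: floor_eq_iff)
  then show ?thesis unfolding euler_fun_def by simp
qed

lemma ef_int: "euler_fun n (of_int m) = (-1) powi m * euler_poly n 0"
  unfolding euler_fun_def by simp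

lemma ef_taylor:
  assumes "of_int \<lfloor>y\<rfloor> \<le> y + h"
    and "y + h < of_int \<lfloor>y\<rfloor> + 1 \<or> (y + h = of_int \<lfloor>y\<rfloor> + 1 \<and> n \<ge> 1)"
  shows "euler_fun n (y + h) = (\<Sum>k\<le>n. real (n choose k) * euler_fun k y * h ^ (n - k))"
proof -
  define s where "s = (-1::real) powi \<lfloor>y\<rfloor>"
  have rhs: "(\<Sum>k\<le>n. real (n choose k) * euler_fun k y * h ^ (n - k)) =
        s * euler_poly n (y - of_int \<lfloor>y\<rfloor> + h)"
    unfolding euler_fun_def s_def euler_shift by (simp add: sum_distrib_left mult_ac)
  from assms(2) show ?thesis
  proof
    assume "y + h < of_int \<lfloor>y\<rfloor> + 1"
    then have "\<lfloor>y + h\<rfloor> = \<lfloor>y\<rfloor>" using assms(1) by (simp add: floor_eq_iff)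
    then have "euler_fun n (y + h) = s * euler_poly n (y - of_int \<lfloor>y\<rfloor> + h)"
      unfolding euler_fun_def s_def by (simp add: algebra_simps)
    with rhs show ?thesis by simp
  next
    assume a: "y + h = of_int \<lfloor>y\<rfloor> + 1 \<and> n \<ge> 1"
    then have "euler_fun n (y + h) = - s * euler_poly n 0"
      unfolding euler_fun_def s_def by (simp add: m1_powi_add)
    moreover have yh: "y - of_int \<lfloor>y\<rfloor> + h = 1" using a by simp
    moreover have "euler_poly n (y - of_int \<lfloor>y\<rfloor> + h) = - euler_poly n 0"
      unfolding yh using a by (simp add: euler_1)
    ultimately show ?thesis unfolding rhs by simp
  qed
qed

lemma bernoulli_fun_1: "bernoulli_fun 1 y = y - of_int \<lfloor>y\<rfloor> - 1/2"
proof -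
  have b0: "bernoulli_num 0 = 1" by (subst bernoulli_num.simps) simp
  have s1: "(\<Sum>k<(1::nat). f k) = (f 0::real)" for f by simp
  have b1: "bernoulli_num 1 = -1/2"
    apply (subst bernoulli_num.simps)
    apply (simp only: s1 one_neq_zero if_False)
    apply (simp add: b0)
    done
  have b1': "bernoulli_num (Suc 0) = -1/2" using b1 by simp
  show ?thesis unfolding bernoulli_fun_def bernoulli_poly_def by (simp add: b0 b1')
qed

lemma periodic_int:
  fixes g :: "int \<Rightarrow> real"
  assumes per: "\<And>k. g (k + m) = g k"
  shows "g k = g (k mod m)"
proof -
  have P: "g (k + int j * m) = g k" for k j
  proof (induction j)
    case 0 then show ?case by simp
  next
    case (Suc j)
    have "k + int (Suc j) * m = (k + int j * m) + m" by (simp add: algebra_simps)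
    then show ?case using per Suc.IH by metis
  qed
  show ?thesis
  proof (cases "k div m \<ge> 0")
    case True
    then have "k mod m + int (nat (k div m)) * m = k" by simp
    then show ?thesis using P[of "k mod m" "nat (k div m)"] by simp
  next
    case False
    then have "int (nat (- (k div m))) = - (k div m)" by simp
    then have "k + int (nat (- (k div m))) * m = k mod m"
      by (simp add: minus_div_mult_eq_mod[symmetric])
    then show ?thesis using P[of k "nat (- (k div m))"] by simp
  qed
qed

lemma perm_mod:
  assumes m: "m > 0" and cop: "coprime b m"
  shows "bij_betw (\<lambda>\<mu>. nat ((int b * int \<mu> + s) mod int m)) {..<m} {..<m}"
proof -
  let ?h = "\<lambda>\<mu>. nat ((int b * int \<mu> + s) mod int m)"
  have sub: "?h ` {..<m} \<subseteq> {..<m}"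
    using m by (auto simp: nat_less_iff)
  have inj: "inj_on ?h {..<m}"
  proof (rule inj_onI)
    fix u v assume u: "u \<in> {..<m}" and v: "v \<in> {..<m}" and e: "?h u = ?h v"
    then have "(int b * int u + s) mod int m = (int b * int v + s) mod int m"
      using m by (simp add: nat_eq_iff2)
    then have "int m dvd int b * (int u - int v)"
      by (simp add: mod_eq_dvd_iff algebra_simps)
    then have "int m dvd int u - int v"
      using cop by (simp add: coprime_dvd_mult_right_iff coprime_commute[of m b] mult.commute)
    then have "int u mod int m = int v mod int m" by (simp add: mod_eq_dvd_iff)
    then show "u = v" using u v by simp
  qed
  show ?thesis unfolding bij_betw_def using inj endo_inj_surj[OF _ sub inj] by simp
qed

lemma periodic_sum:
  fixes g :: "int \<Rightarrow> real"
  assumes m: "m > 0" and per: "\<And>k. g (k + int m) = g k" and cop: "coprime b m"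
  shows "(\<Sum>\<mu><m. g (int b * int \<mu> + s)) = (\<Sum>\<nu><m. g (int \<nu>))"
proof -
  let ?h = "\<lambda>\<mu>. nat ((int b * int \<mu> + s) mod int m)"
  have "(\<Sum>\<mu><m. g (int b * int \<mu> + s)) = (\<Sum>\<mu><m. g (int (?h \<mu>)))"
  proof (rule sum.cong[OF refl])
    fix \<mu> assume "\<mu> \<in> {..<m}"
    have "int (?h \<mu>) = (int b * int \<mu> + s) mod int m" using m by simp
    then show "g (int b * int \<mu> + s) = g (int (?h \<mu>))"
      using periodic_int[of g "int m", OF per, of "int b * int \<mu> + s"] by simp
  qed
  also have "\<dots> = (\<Sum>\<nu><m. g (int \<nu>))"
    using sum.reindex_bij_betw[OF perm_mod[OF m cop, of s], of "\<lambda>\<nu>. g (int \<nu>)"] by simp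
  finally show ?thesis .
qed

lemma euler_mult_fun:
  assumes m: "odd m" and b: "odd b" and cop: "coprime b m"
  shows "(\<Sum>\<mu><m. (-1) ^ \<mu> * euler_fun n ((real b * real \<mu> + w) / real m)) = euler_fun n w / real m ^ n"
proof -
  have m0: "m > 0" using m by (cases m) auto
  define g where "g k = (-1) powi k * euler_fun n ((of_int k + w) / real m)" for k
  have per: "g (k + int m) = g k" for k
  proof -
    have "(of_int (k + int m) + w) / real m = (of_int k + w) / real m + 1" using m0 by (simp add: field_simps)
    then show ?thesis unfolding g_def using m by (simp add: m1_powi_add ef_shift_1)
  qed
  have "(\<Sum>\<mu><m. (-1) ^ \<mu> * euler_fun n ((real b * real \<mu> + w) / real m)) = (\<Sum>\<mu><m. g (int b * int \<mu> + 0))"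
  proof (rule sum.cong[OF refl])
    fix \<mu> assume "\<mu> \<in> {..<m}"
    have "(-1::real) powi (int b * int \<mu> + 0) = (-1) ^ \<mu>"
      using b by (simp add: m1_powi minus_one_power_iff)
    then show "(-1) ^ \<mu> * euler_fun n ((real b * real \<mu> + w) / real m) = g (int b * int \<mu> + 0)"
      unfolding g_def by simp
  qed
  also have "\<dots> = (\<Sum>\<nu><m. g (int \<nu>))" by (rule periodic_sum[of m g, OF m0 per cop])
  also have "\<dots> = (\<Sum>\<mu><m. g (int 1 * int \<mu> + (- \<lfloor>w\<rfloor>)))"
    by (rule periodic_sum[of m g, OF m0 per, symmetric]) simp
  also have "\<dots> = (-1) powi \<lfloor>w\<rfloor> * (\<Sum>\<mu><m. (-1) ^ \<mu> * euler_poly n ((w - of_int \<lfloor>w\<rfloor> + real \<mu>) / real m))"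
  proof -
    have "g (int 1 * int \<mu> + (- \<lfloor>w\<rfloor>)) = (-1) powi \<lfloor>w\<rfloor> * ((-1) ^ \<mu> * euler_poly n ((w - of_int \<lfloor>w\<rfloor> + real \<mu>) / real m))"
      if "\<mu> < m" for \<mu>
    proof -
      let ?t = "w - of_int \<lfloor>w\<rfloor>"
      have "0 \<le> ?t" "?t < 1" by linarith+
      have mu1: "real \<mu> + 1 \<le> real m" using that by linarith
      have "0 \<le> (?t + real \<mu>) / real m" using \<open>0 \<le> ?t\<close> by simp
      moreover have "(?t + real \<mu>) / real m < 1"
        using \<open>?t < 1\<close> mu1 m0 by (simp add: pos_divide_less_eq)
      ultimately have "0 \<le> (?t + real \<mu>) / real m" "(?t + real \<mu>) / real m < 1" by auto
      then have "euler_fun n ((?t + real \<mu>) / real m) = euler_poly n ((?t + real \<mu>) / real m)"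
        by (rule ef_unit)
      moreover have "(-1::real) powi (int \<mu> + - \<lfloor>w\<rfloor>) = (-1) ^ \<mu> * (-1) powi \<lfloor>w\<rfloor>"
        by (simp only: diff_conv_add_uminus m1_powi_add m1_powi_neg m1_powi_of_nat)
      ultimately show ?thesis unfolding g_def by (simp add: algebra_simps)
    qed
    then show ?thesis by (simp add: sum_distrib_left)
  qed
  also have "\<dots> = (-1) powi \<lfloor>w\<rfloor> * (euler_poly n (w - of_int \<lfloor>w\<rfloor>) / real m ^ n)"
    using euler_mult_poly[OF m, of n "w - of_int \<lfloor>w\<rfloor>"] by simp
  also have "\<dots> = euler_fun n w / real m ^ n"
    unfolding euler_fun_def by simp
  finally show ?thesis .
qed




lemma floor_step:
  assumes m: "m > 0" and w0: "0 \<le> \<omega>" and w1: "\<omega> \<le> 1"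
  shows "of_int \<lfloor>real N / real m\<rfloor> \<le> real N / real m + \<omega> / real m"
    and "real N / real m + \<omega> / real m \<le> of_int \<lfloor>real N / real m\<rfloor> + 1"
    and "\<omega> < 1 \<Longrightarrow> real N / real m + \<omega> / real m < of_int \<lfloor>real N / real m\<rfloor> + 1"
proof -
  have fl: "\<lfloor>real N / real m\<rfloor> = int (N div m)" using floor_divide_of_nat_eq[of N m] by simp
  have "N < m * (N div m + 1)" using m
    by (metis add.commute div_mult_mod_eq mod_less_divisor mult.commute mult_Suc_right nat_add_left_cancel_less plus_1_eq_Suc)
  then have le: "real N + 1 \<le> real m * (real (N div m) + 1)"
    by (metis Suc_eq_plus1 Suc_leI of_nat_1 of_nat_add of_nat_le_iff of_nat_mult)
  then have le': "real N + 1 \<le> (real (N div m) + 1) * real m" by (simp add: mult.commute)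
  have mr: "real m > 0" using m by simp
  have "real N = real (N div m) * real m + real (N mod m)"
    by (metis div_mult_mod_eq of_nat_add of_nat_mult)
  then have "real (N div m) * real m \<le> real N" by simp
  then have "real (N div m) \<le> real N / real m"
    using mr by (simp add: le_divide_eq)
  then show "of_int \<lfloor>real N / real m\<rfloor> \<le> real N / real m + \<omega> / real m"
  proof -
    have "0 \<le> \<omega> / real m" using w0 mr by simp
    then show ?thesis using fl \<open>real (N div m) \<le> real N / real m\<close> by simp
  qed
  have "real N / real m + \<omega> / real m = (real N + \<omega>) / real m" by (simp add: add_divide_distrib)
  moreover have "(real N + \<omega>) / real m \<le> real (N div m) + 1"
    using le' w1 mr by (simp add: pos_divide_le_eq)
  ultimately show "real N / real m + \<omega> / real m \<le> of_int \<lfloor>real N / real m\<rfloor> + 1" using fl by simp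
  assume "\<omega> < 1"
  then have "(real N + \<omega>) / real m < real (N div m) + 1"
    using le' mr by (simp add: pos_divide_less_eq)
  then show "real N / real m + \<omega> / real m < of_int \<lfloor>real N / real m\<rfloor> + 1"
    using fl by (simp add: add_divide_distrib)
qed

definition Psum :: "nat \<Rightarrow> nat \<Rightarrow> nat \<Rightarrow> real \<Rightarrow> real" where
  "Psum b m n w = real b * real m ^ n *
     (\<Sum>\<mu><m. (-1) ^ \<mu> * euler_fun n ((real b * real \<mu> + w) / real m) * (real \<mu> - real m / 2))"

lemma pow_scale:
  assumes "i \<le> n" "real m > 0"
  shows "real m ^ n * ((\<omega> / real m) ^ (n - i) * y) = real m ^ i * (\<omega> ^ (n - i) * y)"
proof -
  have "real m ^ n = real m ^ i * real m ^ (n - i)" using assms by (simp add: power_add[symmetric])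
  then show ?thesis using assms by (simp add: power_divide)
qed

lemma Psum_taylor:
  assumes m: "m > 0" and om: "0 \<le> \<omega>" "\<omega> < 1 \<or> (\<omega> = 1 \<and> n \<ge> 1)"
  shows "Psum b m n (real W + \<omega>) = (\<Sum>i\<le>n. real (n choose i) * \<omega> ^ (n - i) * Psum b m i (real W))"
proof -
  have mr: "real m > 0" using m by simp
  have ex: "euler_fun n ((real b * real \<mu> + (real W + \<omega>)) / real m) =
      (\<Sum>i\<le>n. real (n choose i) * euler_fun i ((real b * real \<mu> + real W) / real m) * (\<omega> / real m) ^ (n - i))"
    for \<mu>
  proof -
    let ?N = "b * \<mu> + W"
    have y: "(real b * real \<mu> + real W) / real m = real ?N / real m" by simp
    have e: "(real b * real \<mu> + (real W + \<omega>)) / real m = real ?N / real m + \<omega> / real m"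
      by (simp add: add_divide_distrib)
    have w1: "\<omega> \<le> 1" using om by auto
    show ?thesis unfolding y e
      apply (rule ef_taylor)
      using floor_step[OF m om(1) w1, of ?N] om by auto
  qed
  have "Psum b m n (real W + \<omega>) = real b * real m ^ n * (\<Sum>\<mu><m. (-1) ^ \<mu> *
      (\<Sum>i\<le>n. real (n choose i) * euler_fun i ((real b * real \<mu> + real W) / real m) * (\<omega> / real m) ^ (n - i))
      * (real \<mu> - real m / 2))"
    unfolding Psum_def ex ..
  also have "\<dots> = (\<Sum>i\<le>n. real (n choose i) * \<omega> ^ (n - i) * Psum b m i (real W))"
    unfolding Psum_def
    apply (simp add: sum_distrib_left sum_distrib_right sum.swap[where A="{..<m}"])
    apply (rule sum.cong[OF refl])
    apply (rule sum.cong[OF refl])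
    subgoal for i \<mu>
      using pow_scale[of i n m \<omega> "real b * ((-1) ^ \<mu> * (real (n choose i) * euler_fun i ((real b * real \<mu> + real W) / real m) * (real \<mu> - real m / 2)))"] mr
      by (simp add: mult_ac)
    done
  finally show ?thesis .
qed

lemma pascal_sum:
  "(\<Sum>i\<le>Suc n. real (Suc n choose i) * f i) =
   (\<Sum>i\<le>n. real (n choose i) * f i) + (\<Sum>i\<le>n. real (n choose i) * f (Suc i))"
proof -
  have "(\<Sum>i\<le>Suc n. real (Suc n choose i) * f i) = f 0 + (\<Sum>i\<le>n. real (Suc n choose Suc i) * f (Suc i))"
    by (subst sum.atMost_Suc_shift) simp
  also have "\<dots> = f 0 + (\<Sum>i\<le>n. real (n choose Suc i) * f (Suc i)) + (\<Sum>i\<le>n. real (n choose i) * f (Suc i))"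
    by (simp add: sum.distrib algebra_simps)
  also have "f 0 + (\<Sum>i\<le>n. real (n choose Suc i) * f (Suc i)) = (\<Sum>i\<le>n. real (n choose i) * f i)"
  proof -
    have "(\<Sum>i\<le>n. real (n choose i) * f i) = f 0 + (\<Sum>i<n. real (n choose Suc i) * f (Suc i))"
      by (subst sum.atMost_shift) simp
    moreover have "(\<Sum>i\<le>n. real (n choose Suc i) * f (Suc i)) = (\<Sum>i<n. real (n choose Suc i) * f (Suc i))"
      by (simp add: lessThan_Suc_atMost[symmetric])
    ultimately show ?thesis by simp
  qed
  finally show ?thesis .
qed

lemma ef_part_taylor:
  assumes om: "0 \<le> \<omega>" "\<omega> < 1 \<or> (\<omega> = 1 \<and> n \<ge> 1)"
  shows "(real W + \<omega>) * euler_fun n (real W + \<omega>) - euler_fun (Suc n) (real W + \<omega>) =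
    (\<Sum>i\<le>n. real (n choose i) * \<omega> ^ (n - i) * (real W * euler_fun i (real W) - euler_fun (Suc i) (real W)))"
proof -
  have fl: "\<lfloor>real W\<rfloor> = int W" by simp
  have e1: "euler_fun n (real W + \<omega>) = (\<Sum>i\<le>n. real (n choose i) * euler_fun i (real W) * \<omega> ^ (n - i))"
    by (rule ef_taylor) (use om fl in auto)
  have e2: "euler_fun (Suc n) (real W + \<omega>) = (\<Sum>i\<le>Suc n. real (Suc n choose i) * euler_fun i (real W) * \<omega> ^ (Suc n - i))"
    by (rule ef_taylor) (use om fl in auto)
  have e2': "euler_fun (Suc n) (real W + \<omega>) = (\<Sum>i\<le>n. real (n choose i) * (euler_fun i (real W) * \<omega> ^ (Suc n - i)))
      + (\<Sum>i\<le>n. real (n choose i) * (euler_fun (Suc i) (real W) * \<omega> ^ (n - i)))"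
    unfolding e2 using pascal_sum[of n "\<lambda>i. euler_fun i (real W) * \<omega> ^ (Suc n - i)"]
    by (simp add: mult_ac)
  have "\<omega> * (\<Sum>i\<le>n. real (n choose i) * euler_fun i (real W) * \<omega> ^ (n - i)) =
        (\<Sum>i\<le>n. real (n choose i) * (euler_fun i (real W) * \<omega> ^ (Suc n - i)))"
    by (simp add: sum_distrib_left Suc_diff_le mult_ac)
  then show ?thesis unfolding e1 e2'
    by (simp add: algebra_simps sum_distrib_left sum_subtractf sum.distrib)
qed




definition Tpoly :: "nat \<Rightarrow> nat \<Rightarrow> real \<Rightarrow> nat \<Rightarrow> real \<Rightarrow> real" where
  "Tpoly a c z n x = (\<Sum>i\<le>n. real (n choose i) * real a ^ (n - i + 1) * real c ^ (i + 1) *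
      euler_poly (n - i) z * euler_poly i x)"

lemma Tpoly_taylor:
  assumes c: "c > 0"
  shows "Tpoly a c z n (x + \<omega> / real c) = (\<Sum>i\<le>n. real (n choose i) * \<omega> ^ (n - i) * Tpoly a c z i x)"
proof -
  have cr: "real c > 0" using c by simp
  define f where "f i y = real c ^ i * euler_poly i (y / real c)" for i y
  have apf: "appell f"
    unfolding appell_def
  proof (intro allI)
    fix i y h
    have "f i (y + h) = real c ^ i * (\<Sum>k\<le>i. real (i choose k) * euler_poly k (y / real c) * (h / real c) ^ (i - k))"
      unfolding f_def by (simp add: add_divide_distrib euler_shift)
    also have "\<dots> = (\<Sum>k\<le>i. real (i choose k) * f k y * h ^ (i - k))"
      unfolding f_def sum_distrib_left
      apply (rule sum.cong[OF refl])
      subgoal for k using pow_scale[of k i c h "real (i choose k) * euler_poly k (y / real c)"] cr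
        by (simp add: mult_ac)
      done
    finally show "f i (y + h) = (\<Sum>k\<le>i. real (i choose k) * f k y * h ^ (i - k))" .
  qed
  define g where "g n y = (\<Sum>j\<le>n. real (n choose j) * (real a ^ (n - j) * euler_poly (n - j) z) * f j y)" for n y
  have apg: "appell g"
    using appell_conv[OF apf, of "\<lambda>r. real a ^ r * euler_poly r z"] unfolding g_def[abs_def] .
  have T: "Tpoly a c z n x = real a * real c * g n (real c * x)" for n x
    unfolding Tpoly_def g_def f_def sum_distrib_left using cr
    by (intro sum.cong refl) (simp add: mult_ac Suc_diff_le)
  have "Tpoly a c z n (x + \<omega> / real c) = real a * real c * g n (real c * x + \<omega>)"
    unfolding T using cr by (simp add: distrib_left)
  also have "\<dots> = real a * real c * (\<Sum>i\<le>n. real (n choose i) * g i (real c * x) * \<omega> ^ (n - i))"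
    using apg unfolding appell_def by simp
  also have "\<dots> = (\<Sum>i\<le>n. real (n choose i) * \<omega> ^ (n - i) * Tpoly a c z i x)"
    unfolding T sum_distrib_left by (intro sum.cong refl) (simp add: mult_ac)
  finally show ?thesis .
qed

definition ee :: "nat \<Rightarrow> nat \<Rightarrow> real \<Rightarrow> nat \<Rightarrow> real \<Rightarrow> real" where
  "ee a c z n w = Psum a c n w + Psum c a n w + w * euler_fun n w
      + Tpoly a c z n ((w - real a * z) / real c) / 2 - euler_fun (Suc n) w"

lemma ee_taylor:
  assumes a: "a > 0" and c: "c > 0" and om: "0 \<le> \<omega>" "\<omega> < 1 \<or> (\<omega> = 1 \<and> n \<ge> 1)"
  shows "ee a c z n (real W + \<omega>) = (\<Sum>i\<le>n. real (n choose i) * \<omega> ^ (n - i) * ee a c z i (real W))"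
proof -
  have cr: "real c > 0" using c by simp
  have x: "(real W + \<omega> - real a * z) / real c = (real W - real a * z) / real c + \<omega> / real c"
    by (simp add: diff_divide_distrib add_divide_distrib)
  have p1: "Psum a c n (real W + \<omega>) = (\<Sum>i\<le>n. real (n choose i) * \<omega> ^ (n - i) * Psum a c i (real W))"
    by (rule Psum_taylor[OF c om])
  have p2: "Psum c a n (real W + \<omega>) = (\<Sum>i\<le>n. real (n choose i) * \<omega> ^ (n - i) * Psum c a i (real W))"
    by (rule Psum_taylor[OF a om])
  have p3: "(real W + \<omega>) * euler_fun n (real W + \<omega>) - euler_fun (Suc n) (real W + \<omega>) =
    (\<Sum>i\<le>n. real (n choose i) * \<omega> ^ (n - i) * (real W * euler_fun i (real W) - euler_fun (Suc i) (real W)))"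
    by (rule ef_part_taylor[OF om])
  have p4: "Tpoly a c z n ((real W + \<omega> - real a * z) / real c) =
      (\<Sum>i\<le>n. real (n choose i) * \<omega> ^ (n - i) * Tpoly a c z i ((real W - real a * z) / real c))"
    unfolding x by (rule Tpoly_taylor[OF c])
  have "ee a c z n (real W + \<omega>) = Psum a c n (real W + \<omega>) + Psum c a n (real W + \<omega>)
      + ((real W + \<omega>) * euler_fun n (real W + \<omega>) - euler_fun (Suc n) (real W + \<omega>))
      + Tpoly a c z n ((real W + \<omega> - real a * z) / real c) / 2"
    unfolding ee_def by simp
  also have "\<dots> = (\<Sum>i\<le>n. real (n choose i) * \<omega> ^ (n - i) * ee a c z i (real W))"
    unfolding p1 p2 p3 p4 ee_def
    by (simp add: sum.distrib[symmetric] sum_divide_distrib algebra_simps)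
  finally show ?thesis .
qed

lemma sum_shift_Suc: "(\<Sum>\<nu><m. f (Suc \<nu>)) = (\<Sum>\<nu><m. f \<nu>) + f m - (f 0 :: real)"
  using sum.lessThan_Suc_shift[of f m] sum.lessThan_Suc[of f m] by simp

lemma ee_end:
  assumes a: "odd a" and c: "odd c" and cop: "coprime a c" and z0: "0 \<le> z" and z1: "z < 1"
  shows "ee a c z n (real a * z + real c) + ee a c z n (real a * z) = 0"
proof -
  have a0: "a > 0" using a by (cases a) auto
  have c0: "c > 0" using c by (cases c) auto
  have ar: "real a > 0" and cr: "real c > 0" using a0 c0 by auto
  have efz: "euler_fun n z = euler_poly n z" using z0 z1 by (rule ef_unit)
  have P1: "Psum a c n (real a * z + real c) = - Psum a c n (real a * z)"
  proof -
    have "(real a * real \<mu> + (real a * z + real c)) / real c = (real a * real \<mu> + real a * z) / real c + 1" for \<mu>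
      using cr by (simp add: field_simps)
    then show ?thesis unfolding Psum_def
      by (simp add: ef_shift_1 sum_negf)
  qed
  define h where "h \<nu> = (-1) ^ \<nu> * euler_fun n ((real c * real \<nu> + real a * z) / real a)" for \<nu>
  define q where "q \<nu> = real \<nu> - real a / 2" for \<nu>
  have P2a: "Psum c a n (real a * z) = real c * real a ^ n * (\<Sum>\<nu><a. h \<nu> * q \<nu>)"
    unfolding Psum_def h_def q_def by (simp add: mult_ac)
  have P2b: "Psum c a n (real a * z + real c) = real c * real a ^ n * (\<Sum>\<nu><a. - (h (Suc \<nu>) * q (Suc \<nu>)) + h (Suc \<nu>))"
    unfolding Psum_def
  proof (intro arg_cong[where f="\<lambda>s. real c * real a ^ n * s"] sum.cong refl)
    fix \<nu>
    have "(real c * real \<nu> + (real a * z + real c)) / real a = (real c * real (Suc \<nu>) + real a * z) / real a"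
      by (simp add: algebra_simps)
    then show "(-1) ^ \<nu> * euler_fun n ((real c * real \<nu> + (real a * z + real c)) / real a) * (real \<nu> - real a / 2) =
       - (h (Suc \<nu>) * q (Suc \<nu>)) + h (Suc \<nu>)"
      unfolding h_def q_def by (simp add: algebra_simps)
  qed
  have ha: "h a = euler_fun n z"
  proof -
    have "(real c * real a + real a * z) / real a = z + real c" using ar by (simp add: field_simps)
    then show ?thesis unfolding h_def using a c by (simp add: ef_shift_nat)
  qed
  have h0: "h 0 = euler_fun n z" unfolding h_def using ar by simp
  have sumh: "(\<Sum>\<nu><a. h \<nu>) = euler_fun n (real a * z) / real a ^ n"
    unfolding h_def using euler_mult_fun[OF a c, of n "real a * z"] cop
    by (simp add: coprime_commute)
  have S1: "(\<Sum>\<nu><a. h (Suc \<nu>) * q (Suc \<nu>)) = (\<Sum>\<nu><a. h \<nu> * q \<nu>) + real a * euler_fun n z"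
    using sum_shift_Suc[of "\<lambda>\<nu>. h \<nu> * q \<nu>" a] ha h0 unfolding q_def by (simp add: algebra_simps)
  have S2: "(\<Sum>\<nu><a. h (Suc \<nu>)) = euler_fun n (real a * z) / real a ^ n"
    using sum_shift_Suc[of h a] ha h0 sumh by simp
  have P2: "Psum c a n (real a * z + real c) = - Psum c a n (real a * z)
      - real c * real a ^ (Suc n) * euler_fun n z + real c * euler_fun n (real a * z)"
    unfolding P2b P2a sum.distrib sum_negf S1 S2 using ar by (simp add: algebra_simps)
  have E1: "euler_fun n (real a * z + real c) = - euler_fun n (real a * z)"
    using c by (simp add: ef_shift_nat)
  have E2: "euler_fun (Suc n) (real a * z + real c) = - euler_fun (Suc n) (real a * z)"
    using c by (simp add: ef_shift_nat)
  have T: "Tpoly a c z n ((real a * z + real c - real a * z) / real c) + Tpoly a c z n ((real a * z - real a * z) / real c)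
      = 2 * real a ^ Suc n * real c * euler_poly n z"
  proof -
    have "Tpoly a c z n 1 + Tpoly a c z n 0 = (\<Sum>i\<le>n. real (n choose i) * real a ^ (n - i + 1) * real c ^ (i + 1) *
      euler_poly (n - i) z * (euler_poly i 1 + euler_poly i 0))"
      unfolding Tpoly_def by (simp add: sum.distrib[symmetric] algebra_simps)
    also have "\<dots> = (\<Sum>i\<le>n. real (n choose i) * real a ^ (n - i + 1) * real c ^ (i + 1) *
      euler_poly (n - i) z * (2 * 0 ^ i))"
      using euler_fe[of _ 0] by simp
    also have "\<dots> = 2 * real a ^ Suc n * real c * euler_poly n z"
      by (simp add: sum.atMost_shift)
    finally show ?thesis using cr by simp
  qed
  show ?thesis
    unfolding ee_def P1 P2 E1 E2
    using T efz by (simp add: algebra_simps)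
qed




lemma ef0_nat: "euler_fun 0 (real k / real m) = (-1) ^ (k div m)"
proof -
  have "\<lfloor>real k / real m\<rfloor> = int (k div m)" using floor_divide_of_nat_eq[of k m] by simp
  then show ?thesis unfolding euler_fun_def by simp
qed

lemma ef0_jump:
  fixes N m :: nat
  shows "euler_fun 0 (real (Suc N) / real m) - euler_fun 0 (real N / real m) =
     (if m dvd Suc N then 2 * (-1) ^ (Suc N div m) else 0)"
proof (cases "m dvd Suc N")
  case True
  then have "Suc N mod m = 0" by simp
  then have "Suc N div m = Suc (N div m)" by (simp add: div_Suc)
  then show ?thesis using True unfolding ef0_nat by simp
next
  case False
  then have "Suc N mod m \<noteq> 0" by (simp add: dvd_eq_mod_eq_0)
  then have "Suc N div m = N div m" by (simp add: div_Suc)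
  then show ?thesis using False unfolding ef0_nat by simp
qed

lemma unique_root:
  fixes b m s :: nat
  assumes m: "m > 0" and cop: "coprime b m"
  obtains \<mu>0 where "\<mu>0 < m" "m dvd b * \<mu>0 + s" "\<And>\<mu>. \<mu> < m \<Longrightarrow> m dvd b * \<mu> + s \<Longrightarrow> \<mu> = \<mu>0"
proof -
  let ?h = "\<lambda>\<mu>. nat ((int b * int \<mu> + int s) mod int m)"
  have hh: "?h \<mu> = (b * \<mu> + s) mod m" for \<mu>
    by (metis nat_int of_nat_add of_nat_mult of_nat_mod)
  have bij: "bij_betw ?h {..<m} {..<m}" by (rule perm_mod[OF m cop])
  then have "0 \<in> ?h ` {..<m}" using m unfolding bij_betw_def by auto
  then obtain \<mu>0 where mu0: "\<mu>0 < m" "?h \<mu>0 = 0" by auto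
  show ?thesis
  proof (rule that[of \<mu>0])
    show "\<mu>0 < m" by fact
    show "m dvd b * \<mu>0 + s" using mu0 hh by (simp add: dvd_eq_mod_eq_0)
    fix \<mu> assume "\<mu> < m" "m dvd b * \<mu> + s"
    then have "?h \<mu> = ?h \<mu>0" using mu0 hh by (simp add: dvd_eq_mod_eq_0)
    then show "\<mu> = \<mu>0" using bij \<open>\<mu> < m\<close> mu0 unfolding bij_betw_def inj_on_def by auto
  qed
qed

lemma Psum0_jump:
  assumes m: "m > 0" and mu0: "\<mu>0 < m" "m dvd b * \<mu>0 + W + 1"
    and uniq: "\<And>\<mu>. \<mu> < m \<Longrightarrow> m dvd b * \<mu> + W + 1 \<Longrightarrow> \<mu> = \<mu>0"
  shows "Psum b m 0 (real W + 1) - Psum b m 0 (real W) =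
    2 * real b * (-1) ^ \<mu>0 * (-1) ^ ((b * \<mu>0 + W + 1) div m) * (real \<mu>0 - real m / 2)"
proof -
  define A where "A \<mu> = (-1) ^ \<mu> * euler_fun 0 (real (Suc (b * \<mu> + W)) / real m) * (real \<mu> - real m / 2)" for \<mu>
  define B where "B \<mu> = (-1) ^ \<mu> * euler_fun 0 (real (b * \<mu> + W) / real m) * (real \<mu> - real m / 2)" for \<mu>
  have PA: "Psum b m 0 (real W + 1) = real b * (\<Sum>\<mu><m. A \<mu>)"
    unfolding Psum_def A_def power_0 mult_1_right
  proof (intro arg_cong[where f="\<lambda>s. real b * s"] sum.cong refl)
    fix \<mu> have "real b * real \<mu> + (real W + 1) = real (Suc (b * \<mu> + W))" by simp
    then show "(-1) ^ \<mu> * euler_fun 0 ((real b * real \<mu> + (real W + 1)) / real m) * (real \<mu> - real m / 2) =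
      (-1) ^ \<mu> * euler_fun 0 (real (Suc (b * \<mu> + W)) / real m) * (real \<mu> - real m / 2)" by (simp only:)
  qed
  have PB: "Psum b m 0 (real W) = real b * (\<Sum>\<mu><m. B \<mu>)"
    unfolding Psum_def B_def power_0 mult_1_right
  proof (intro arg_cong[where f="\<lambda>s. real b * s"] sum.cong refl)
    fix \<mu> have "real b * real \<mu> + real W = real (b * \<mu> + W)" by simp
    then show "(-1) ^ \<mu> * euler_fun 0 ((real b * real \<mu> + real W) / real m) * (real \<mu> - real m / 2) =
      (-1) ^ \<mu> * euler_fun 0 (real (b * \<mu> + W) / real m) * (real \<mu> - real m / 2)" by (simp only:)
  qed
  have "Psum b m 0 (real W + 1) - Psum b m 0 (real W) =
     real b * (\<Sum>\<mu><m. (-1) ^ \<mu> * (euler_fun 0 (real (Suc (b * \<mu> + W)) / real m) - euler_fun 0 (real (b * \<mu> + W) / real m)) * (real \<mu> - real m / 2))"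
    unfolding PA PB right_diff_distrib[symmetric] sum_subtractf[symmetric] A_def B_def
    by (intro arg_cong[where f="\<lambda>s. real b * s"] sum.cong refl) (simp add: algebra_simps)
  also have "\<dots> = real b * (\<Sum>\<mu><m. if \<mu> = \<mu>0 then (-1) ^ \<mu> * (2 * (-1) ^ (Suc (b * \<mu> + W) div m)) * (real \<mu> - real m / 2) else 0)"
  proof (intro arg_cong[where f="\<lambda>s. real b * s"] sum.cong refl)
    fix \<mu> assume "\<mu> \<in> {..<m}"
    then have mu: "\<mu> < m" by simp
    have e: "Suc (b * \<mu> + W) = b * \<mu> + W + 1" by simp
    have "m dvd Suc (b * \<mu> + W) \<longleftrightarrow> \<mu> = \<mu>0"
    proof
      assume "m dvd Suc (b * \<mu> + W)"
      then have "m dvd b * \<mu> + W + 1" by (simp only: e)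
      then show "\<mu> = \<mu>0" by (rule uniq[OF mu])
    next
      assume "\<mu> = \<mu>0"
      have e0: "Suc (b * \<mu>0 + W) = b * \<mu>0 + W + 1" by simp
      show "m dvd Suc (b * \<mu> + W)" unfolding \<open>\<mu> = \<mu>0\<close> e0 by (rule mu0(2))
    qed
    then show "(-1) ^ \<mu> * (euler_fun 0 (real (Suc (b * \<mu> + W)) / real m) - euler_fun 0 (real (b * \<mu> + W) / real m)) * (real \<mu> - real m / 2) =
      (if \<mu> = \<mu>0 then (-1) ^ \<mu> * (2 * (-1) ^ (Suc (b * \<mu> + W) div m)) * (real \<mu> - real m / 2) else 0)"
      unfolding ef0_jump by auto
  qed
  also have "\<dots> = 2 * real b * (-1) ^ \<mu>0 * (-1) ^ ((b * \<mu>0 + W + 1) div m) * (real \<mu>0 - real m / 2)"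
    using mu0 by simp
  finally show ?thesis .
qed

lemma euler_1_0: "euler_poly 1 0 = -1/2"
  using euler_rec[of 1 0] by simp

lemma ee_jump:
  assumes a: "odd a" and c: "odd c" and cop: "coprime a c" and W: "W + 2 \<le> a + c"
  shows "ee a c z 0 (real W + 1) = ee a c z 0 (real W)"
proof -
  have a0: "a > 0" using a by (cases a) auto
  have c0: "c > 0" using c by (cases c) auto
  obtain \<mu>0 where mu0: "\<mu>0 < c" "c dvd a * \<mu>0 + (W + 1)"
    and umu: "\<And>\<mu>. \<mu> < c \<Longrightarrow> c dvd a * \<mu> + (W + 1) \<Longrightarrow> \<mu> = \<mu>0"
    using unique_root[OF c0 cop] by metis
  obtain \<nu>0 where nu0: "\<nu>0 < a" "a dvd c * \<nu>0 + (W + 1)"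
    and unu: "\<And>\<nu>. \<nu> < a \<Longrightarrow> a dvd c * \<nu> + (W + 1) \<Longrightarrow> \<nu> = \<nu>0"
    using unique_root[OF a0, of c] cop by (metis coprime_commute)
  define S where "S = a * \<mu>0 + c * \<nu>0 + W + 1"
  have "S = (c * \<nu>0 + (W + 1)) + a * \<mu>0" unfolding S_def by simp
  then have "a dvd S" using nu0(2) by (simp only: dvd_add dvd_triv_left)
  have "S = (a * \<mu>0 + (W + 1)) + c * \<nu>0" unfolding S_def by simp
  then have "c dvd S" using mu0(2) by (simp only: dvd_add dvd_triv_left)
  have "a * c dvd S" using \<open>a dvd S\<close> \<open>c dvd S\<close> cop by (simp add: divides_mult)
  then obtain k where k: "S = a * c * k" by blast
  have h1: "a * \<mu>0 \<le> a * (c - 1)" using mu0(1) by (intro mult_le_mono2) arith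
  have h2: "c * \<nu>0 \<le> c * (a - 1)" using nu0(1) by (intro mult_le_mono2) arith
  have "S \<le> a * (c - 1) + c * (a - 1) + W + 1" unfolding S_def using h1 h2 by linarith
  also have "\<dots> < 2 * (a * c)"
  proof -
    have e1: "a * (c - 1) = a * c - a" by (simp add: diff_mult_distrib2)
    have e2: "c * (a - 1) = a * c - c" by (simp add: diff_mult_distrib2 mult.commute)
    have "a \<le> a * c" using c0 by simp
    moreover have "c \<le> a * c" using a0 by simp
    ultimately show ?thesis unfolding e1 e2 using W by linarith
  qed
  finally have "S < 2 * (a * c)" .
  moreover have "S > 0" unfolding S_def by simp
  ultimately have k1: "a * c * k < a * c * 2" "k \<noteq> 0" using k by (auto simp: mult.commute)
  then have "k < 2" by (meson mult_less_cancel1)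
  with k1(2) have "k = 1" by arith
  then have S: "a * \<mu>0 + c * \<nu>0 + W + 1 = a * c" using k S_def by simp
  have d1: "(a * \<mu>0 + W + 1) div c = a - \<nu>0"
  proof -
    have "a * \<mu>0 + W + 1 = c * (a - \<nu>0)" using S by (simp add: diff_mult_distrib2 algebra_simps)
    then show ?thesis using c0 by simp
  qed
  have d2: "(c * \<nu>0 + W + 1) div a = c - \<mu>0"
  proof -
    have "c * \<nu>0 + W + 1 = a * (c - \<mu>0)" using S by (simp add: diff_mult_distrib2 algebra_simps)
    then show ?thesis using a0 by simp
  qed
  have par: "even (\<mu>0 + \<nu>0 + W)"
  proof -
    have "odd (a * c)" using a c by simp
    then have "odd (a * \<mu>0 + c * \<nu>0 + W + 1)" using S by simp
    then show ?thesis using a c by simp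
  qed
  have s1: "(-1::real) ^ \<mu>0 * (-1) ^ (a - \<nu>0) = - ((-1) ^ W)"
    using par a nu0(1) by (simp add: minus_one_power_iff power_add[symmetric]) presburger?
  have s2: "(-1::real) ^ \<nu>0 * (-1) ^ (c - \<mu>0) = - ((-1) ^ W)"
    using par c mu0(1) by (simp add: minus_one_power_iff power_add[symmetric]) presburger?
  have mu0': "c dvd a * \<mu>0 + W + 1" using mu0(2) by (simp only: add.assoc)
  have umu': "\<mu> = \<mu>0" if "\<mu> < c" "c dvd a * \<mu> + W + 1" for \<mu>
    using umu[of \<mu>] that by (simp only: add.assoc)
  have nu0': "a dvd c * \<nu>0 + W + 1" using nu0(2) by (simp only: add.assoc)
  have unu': "\<nu> = \<nu>0" if "\<nu> < a" "a dvd c * \<nu> + W + 1" for \<nu>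
    using unu[of \<nu>] that by (simp only: add.assoc)
  have J1a: "Psum a c 0 (real W + 1) - Psum a c 0 (real W) =
      2 * real a * (-1) ^ \<mu>0 * (-1) ^ ((a * \<mu>0 + W + 1) div c) * (real \<mu>0 - real c / 2)"
    by (rule Psum0_jump[OF c0 mu0(1) mu0' umu'])
  have J1: "Psum a c 0 (real W + 1) - Psum a c 0 (real W) = - 2 * real a * (-1) ^ W * (real \<mu>0 - real c / 2)"
    unfolding J1a d1 mult.assoc[of _ "(-1) ^ \<mu>0"] s1[unfolded mult.assoc]
    by (simp add: mult_ac)
  have J2a: "Psum c a 0 (real W + 1) - Psum c a 0 (real W) =
      2 * real c * (-1) ^ \<nu>0 * (-1) ^ ((c * \<nu>0 + W + 1) div a) * (real \<nu>0 - real a / 2)"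
    by (rule Psum0_jump[OF a0 nu0(1) nu0' unu'])
  have J2: "Psum c a 0 (real W + 1) - Psum c a 0 (real W) = - 2 * real c * (-1) ^ W * (real \<nu>0 - real a / 2)"
    unfolding J2a d2 mult.assoc[of _ "(-1) ^ \<nu>0"] s2[unfolded mult.assoc]
    by (simp add: mult_ac)
  have Sr: "real a * real \<mu>0 + real c * real \<nu>0 = real a * real c - real W - 1"
    using arg_cong[OF S, of real] by simp
  have T0: "Tpoly a c z 0 x = real a * real c" for x unfolding Tpoly_def by simp
  have f0: "euler_fun 0 (real W) = (-1) ^ W" "euler_fun 0 (real W + 1) = - ((-1) ^ W)"
    using ef_int[of 0 "int W"] ef_shift_1[of 0 "real W"] by simp_all
  have f1: "euler_fun 1 (real W) = - ((-1) ^ W) / 2" "euler_fun 1 (real W + 1) = (-1) ^ W / 2"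
    using ef_int[of 1 "int W"] ef_shift_1[of 1 "real W"] euler_1_0 by simp_all
  define sg where "sg = (-1::real) ^ W"
  have D: "ee a c z 0 (real W + 1) - ee a c z 0 (real W) =
      (Psum a c 0 (real W + 1) - Psum a c 0 (real W)) + (Psum c a 0 (real W + 1) - Psum c a 0 (real W))
      + ((real W + 1) * euler_fun 0 (real W + 1) - real W * euler_fun 0 (real W))
      - (euler_fun 1 (real W + 1) - euler_fun 1 (real W))"
    unfolding ee_def T0 by simp
  have key: "- 2 * real a * sg * (real \<mu>0 - real c / 2) + (- 2 * real c * sg * (real \<nu>0 - real a / 2))
      = - 2 * sg * (real a * real \<mu>0 + real c * real \<nu>0 - real a * real c)"
    by (simp add: algebra_simps)
  have "ee a c z 0 (real W + 1) - ee a c z 0 (real W) =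
      - 2 * sg * (real a * real \<mu>0 + real c * real \<nu>0 - real a * real c)
      + ((real W + 1) * (- sg) - real W * sg) - (sg / 2 - (- sg / 2))"
    unfolding D J1 J2 f0 f1 sg_def by (simp add: algebra_simps)
  also have "\<dots> = 0" unfolding Sr by (simp add: algebra_simps)
  finally show ?thesis by simp
qed




lemma sum_atMost_last: "(\<Sum>i\<le>(n::nat). g i) = (\<Sum>i<n. g i) + (g n :: real)"
  using sum.lessThan_Suc[of g n] by (simp add: lessThan_Suc_atMost)

lemma ee_const:
  assumes a: "odd a" and c: "odd c" and cop: "coprime a c"
    and IH: "\<And>i w. i < n \<Longrightarrow> 0 \<le> w \<Longrightarrow> w < real a + real c \<Longrightarrow> ee a c z i w = 0"
    and w0: "0 \<le> w" and w1: "w < real a + real c"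
  shows "ee a c z n w = ee a c z n 0"
proof -
  have a0: "a > 0" using a by (cases a) auto
  have c0: "c > 0" using c by (cases c) auto
  have tay: "ee a c z n (real W + \<omega>) = ee a c z n (real W)"
    if W: "real W < real a + real c" and om: "0 \<le> \<omega>" "\<omega> < 1 \<or> (\<omega> = 1 \<and> n \<ge> 1)" for W \<omega>
  proof -
    have "ee a c z n (real W + \<omega>) = (\<Sum>i\<le>n. real (n choose i) * \<omega> ^ (n - i) * ee a c z i (real W))"
      by (rule ee_taylor[OF a0 c0 om])
    also have "\<dots> = (\<Sum>i<n. real (n choose i) * \<omega> ^ (n - i) * ee a c z i (real W)) + ee a c z n (real W)"
      by (simp add: sum_atMost_last)
    also have "(\<Sum>i<n. real (n choose i) * \<omega> ^ (n - i) * ee a c z i (real W)) = 0"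
      using IH W by (intro sum.neutral) auto
    finally show ?thesis by simp
  qed
  have step: "ee a c z n (real W + 1) = ee a c z n (real W)" if W: "real W + 1 < real a + real c" for W
  proof (cases "n \<ge> 1")
    case True
    then show ?thesis using tay[of W 1] W by simp
  next
    case False
    then have n0: "n = 0" by simp
    have "W + 2 \<le> a + c" using W by linarith
    then show ?thesis using ee_jump[OF a c cop] n0 by simp
  qed
  have nat: "ee a c z n (real W) = ee a c z n 0" if "real W < real a + real c" for W
    using that
  proof (induction W)
    case 0 then show ?case by simp
  next
    case (Suc V)
    then have "real V + 1 < real a + real c" by simp
    then have "ee a c z n (real V + 1) = ee a c z n (real V)" by (rule step)
    moreover have "ee a c z n (real V) = ee a c z n 0" using Suc by simp
    moreover have "real (Suc V) = real V + 1" by simp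
    ultimately show ?case by (simp only:)
  qed
  define W where "W = nat \<lfloor>w\<rfloor>"
  have Wr: "real W = of_int \<lfloor>w\<rfloor>" using w0 unfolding W_def by simp
  have "w = real W + (w - real W)" by simp
  moreover have "0 \<le> w - real W" "w - real W < 1" unfolding Wr by linarith+
  moreover have "real W < real a + real c" using w1 Wr by linarith
  ultimately have "ee a c z n w = ee a c z n (real W)" using tay[of W "w - real W"] by simp
  also have "\<dots> = ee a c z n 0" using nat \<open>real W < real a + real c\<close> by simp
  finally show ?thesis .
qed

lemma ee_zero:
  assumes a: "odd a" and c: "odd c" and cop: "coprime a c" and z0: "0 \<le> z" and z1: "z < 1"
  shows "0 \<le> w \<Longrightarrow> w < real a + real c \<Longrightarrow> ee a c z n w = 0"
proof (induction n arbitrary: w rule: less_induct)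
  case (less n)
  have a0: "a > 0" using a by (cases a) auto
  have c0: "c > 0" using c by (cases c) auto
  have IH: "\<And>i w. i < n \<Longrightarrow> 0 \<le> w \<Longrightarrow> w < real a + real c \<Longrightarrow> ee a c z i w = 0"
    using less.IH by blast
  have az0: "0 \<le> real a * z" using z0 by simp
  have az1: "real a * z < real a" using z1 a0 by simp
  have "ee a c z n (real a * z + real c) = ee a c z n 0"
    by (rule ee_const[OF a c cop IH]) (use az0 az1 in auto)
  moreover have "ee a c z n (real a * z) = ee a c z n 0"
    by (rule ee_const[OF a c cop IH]) (use az0 az1 c0 in auto)
  moreover have "ee a c z n (real a * z + real c) + ee a c z n (real a * z) = 0"
    by (rule ee_end[OF a c cop z0 z1])
  ultimately have "ee a c z n 0 = 0" by simp
  moreover have "ee a c z n w = ee a c z n 0"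
    by (rule ee_const[OF a c cop IH]) (use less.prems in auto)
  ultimately show ?case by simp
qed

lemma S5_unit:
  assumes b: "odd b" and m: "odd m" and cop: "coprime b m" and u0: "0 \<le> u" and u1: "u < 1"
  shows "real b * real m ^ Suc n * S5 (Suc n) b m v u =
     Psum b m n (real b * u + real m * v) + real b * u * euler_fun n (real b * u + real m * v)"
proof -
  have m0: "m > 0" using m by (cases m) auto
  have mr: "real m > 0" using m0 by simp
  define w where "w = real b * u + real m * v"
  have arg: "real b * ((real \<mu> + u) / real m) + v = (real b * real \<mu> + w) / real m" for \<mu>
    unfolding w_def using mr by (simp add: field_simps)
  have bf: "bernoulli_fun 1 ((real \<mu> + u) / real m) = (real \<mu> + u) / real m - 1/2" if "\<mu> < m" for \<mu>
  proof -
    have mu1: "real \<mu> + 1 \<le> real m" using that by linarith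
    have "0 \<le> (real \<mu> + u) / real m" using u0 by simp
    moreover have "(real \<mu> + u) / real m < 1" using u1 mu1 mr by (simp add: pos_divide_less_eq)
    ultimately have "\<lfloor>(real \<mu> + u) / real m\<rfloor> = 0" by (simp add: floor_eq_iff)
    then show ?thesis unfolding bernoulli_fun_1 by simp
  qed
  have "real b * real m ^ Suc n * S5 (Suc n) b m v u =
     real b * real m ^ n * (\<Sum>\<mu><m. (-1) ^ \<mu> * euler_fun n ((real b * real \<mu> + w) / real m) * (real \<mu> - real m / 2))
     + real b * real m ^ n * u * (\<Sum>\<mu><m. (-1) ^ \<mu> * euler_fun n ((real b * real \<mu> + w) / real m))"
    unfolding S5_def sum_distrib_left sum.distrib[symmetric]
  proof (rule sum.cong[OF refl])
    fix \<mu> assume "\<mu> \<in> {..<m}"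
    then have "\<mu> < m" by simp
    have e: "real m * ((real \<mu> + u) / real m - 1/2) = (real \<mu> - real m / 2) + u" using mr by (simp add: field_simps)
    show "real b * real m ^ Suc n * ((-1) ^ \<mu> * euler_fun (Suc n - 1) (real b * ((real \<mu> + u) / real m) + v) *
           bernoulli_fun 1 ((real \<mu> + u) / real m)) =
        real b * real m ^ n * ((-1) ^ \<mu> * euler_fun n ((real b * real \<mu> + w) / real m) * (real \<mu> - real m / 2)) +
        real b * real m ^ n * u * ((-1) ^ \<mu> * euler_fun n ((real b * real \<mu> + w) / real m))"
    proof -
      define Q where "Q = real b * real m ^ n * ((-1) ^ \<mu> * euler_fun n ((real b * real \<mu> + w) / real m))"
      have "real b * real m ^ Suc n * ((-1) ^ \<mu> * euler_fun (Suc n - 1) (real b * ((real \<mu> + u) / real m) + v) *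
           bernoulli_fun 1 ((real \<mu> + u) / real m)) = Q * (real m * ((real \<mu> + u) / real m - 1/2))"
        unfolding arg bf[OF \<open>\<mu> < m\<close>] Q_def by (simp add: mult_ac)
      also have "\<dots> = Q * ((real \<mu> - real m / 2) + u)" unfolding e ..
      also have "\<dots> = Q * (real \<mu> - real m / 2) + real b * real m ^ n * u * ((-1) ^ \<mu> * euler_fun n ((real b * real \<mu> + w) / real m))"
        unfolding Q_def by (simp add: algebra_simps)
      finally show ?thesis unfolding Q_def by (simp add: mult_ac)
    qed
  qed
  also have "(\<Sum>\<mu><m. (-1) ^ \<mu> * euler_fun n ((real b * real \<mu> + w) / real m)) = euler_fun n w / real m ^ n"
    by (rule euler_mult_fun[OF m b cop])
  finally show ?thesis unfolding Psum_def w_def using mr by simp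
qed




lemma bf1_shift: "bernoulli_fun 1 (y + 1) = bernoulli_fun 1 y"
  unfolding bernoulli_fun_1 by simp

lemma S5_x: "S5 p b m (v + 1) u = - S5 p b m v u"
proof -
  have "real b * ((real \<mu> + u) / real m) + (v + 1) = (real b * ((real \<mu> + u) / real m) + v) + 1" for \<mu>
    by simp
  then show ?thesis unfolding S5_def by (simp only: ef_shift_1 sum_negf[symmetric]) simp
qed

lemma S5_z:
  assumes b: "odd b" and m: "odd m"
  shows "S5 p b m v (u + 1) = - S5 p b m v u"
proof -
  have m0: "m > 0" using m by (cases m) auto
  have mr: "real m > 0" using m0 by simp
  define f where "f \<mu> = (-1) ^ \<mu> * euler_fun (p - 1) (real b * ((real \<mu> + u) / real m) + v) *
      bernoulli_fun 1 ((real \<mu> + u) / real m)" for \<mu>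
  have S: "S5 p b m v u = (\<Sum>\<mu><m. f \<mu>)" unfolding S5_def f_def ..
  have S1: "S5 p b m v (u + 1) = (\<Sum>\<mu><m. - f (Suc \<mu>))"
    unfolding S5_def f_def
  proof (rule sum.cong[OF refl])
    fix \<mu>
    have "real \<mu> + (u + 1) = real (Suc \<mu>) + u" by simp
    then show "(-1) ^ \<mu> * euler_fun (p - 1) (real b * ((real \<mu> + (u + 1)) / real m) + v) *
        bernoulli_fun 1 ((real \<mu> + (u + 1)) / real m) =
      - ((-1) ^ Suc \<mu> * euler_fun (p - 1) (real b * ((real (Suc \<mu>) + u) / real m) + v) *
        bernoulli_fun 1 ((real (Suc \<mu>) + u) / real m))"
      by (simp only:) simp
  qed
  have fm: "f m = f 0"
  proof -
    have e1: "(real m + u) / real m = u / real m + 1" using mr by (simp add: field_simps)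
    have e2: "real b * (u / real m + 1) + v = (real b * (u / real m) + v) + real b" by (simp add: algebra_simps)
    show ?thesis unfolding f_def e1 e2 bf1_shift ef_shift_nat using b m by simp
  qed
  show ?thesis unfolding S1 S sum_negf sum_shift_Suc fm by simp
qed

lemma antiper_nat:
  assumes "\<And>t. f (t + 1) = - f t"
  shows "f (t + real k) = (-1) ^ k * (f t :: real)"
proof (induction k)
  case 0 then show ?case by simp
next
  case (Suc k)
  have e: "t + real (Suc k) = (t + real k) + 1" by simp
  have "f (t + real (Suc k)) = - f (t + real k)" unfolding e by (rule assms)
  then show ?case using Suc by simp
qed

lemma antiper_zero:
  fixes f :: "real \<Rightarrow> real"
  assumes per: "\<And>t. f (t + 1) = - f t" and z: "\<And>t. 0 \<le> t \<Longrightarrow> t < 1 \<Longrightarrow> f t = 0"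
  shows "f t = 0"
proof -
  define t0 where "t0 = t - of_int \<lfloor>t\<rfloor>"
  have t0: "f t0 = 0" unfolding t0_def by (rule z) linarith+
  show ?thesis
  proof (cases "\<lfloor>t\<rfloor> \<ge> 0")
    case True
    then have "t = t0 + real (nat \<lfloor>t\<rfloor>)" unfolding t0_def by simp
    then show ?thesis using antiper_nat[of f, OF per, of t0 "nat \<lfloor>t\<rfloor>"] t0 by simp
  next
    case False
    then have "t0 = t + real (nat (- \<lfloor>t\<rfloor>))" unfolding t0_def by simp
    then have "f t0 = (-1) ^ nat (- \<lfloor>t\<rfloor>) * f t" using antiper_nat[of f, OF per] by simp
    then show ?thesis using t0 by simp
  qed
qed

lemma sum_reindex_T:
  assumes x0: "0 \<le> x" and x1: "x < 1" and z0: "0 \<le> z" and z1: "z < 1"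
  shows "(\<Sum>j=1..Suc n. real ((Suc n - 1) choose (j - 1)) * real a ^ (Suc n + 1 - j) * real c ^ j *
        euler_fun (Suc n - j) z * euler_fun (j - 1) x) = Tpoly a c z n x"
proof -
  have "(\<Sum>j=1..Suc n. real ((Suc n - 1) choose (j - 1)) * real a ^ (Suc n + 1 - j) * real c ^ j *
        euler_fun (Suc n - j) z * euler_fun (j - 1) x) =
      (\<Sum>i=0..n. real ((Suc n - 1) choose (Suc i - 1)) * real a ^ (Suc n + 1 - Suc i) * real c ^ Suc i *
        euler_fun (Suc n - Suc i) z * euler_fun (Suc i - 1) x)"
    using sum.shift_bounds_cl_Suc_ivl[of "\<lambda>j. real ((Suc n - 1) choose (j - 1)) * real a ^ (Suc n + 1 - j) * real c ^ j *
        euler_fun (Suc n - j) z * euler_fun (j - 1) x" 0 n] by simp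
  also have "\<dots> = Tpoly a c z n x"
    unfolding Tpoly_def atLeast0AtMost
    by (intro sum.cong refl) (simp add: ef_unit x0 x1 z0 z1 Suc_diff_le)
  finally show ?thesis .
qed

theorem corollary3:
  fixes a c p :: nat and x z :: real
  assumes "a > 0" "c > 0" "odd a" "odd c" "coprime a c" "p \<ge> 1"
  shows "real a * real c ^ p * S5 p a c x z + real c * real a ^ p * S5 p c a z x =
    - (1/2) * (\<Sum>j=1..p. real ((p - 1) choose (j - 1)) * real a ^ (p + 1 - j) * real c ^ j *
        euler_fun (p - j) z * euler_fun (j - 1) x)
    + euler_fun p (real a * z + real c * x)"
proof -
  note a = \<open>odd a\<close> and c = \<open>odd c\<close> and cop = \<open>coprime a c\<close>
  obtain n where p: "p = Suc n" using \<open>p \<ge> 1\<close> by (cases p) auto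
  define F where "F x z = real a * real c ^ p * S5 p a c x z + real c * real a ^ p * S5 p c a z x -
    (- (1/2) * (\<Sum>j=1..p. real ((p - 1) choose (j - 1)) * real a ^ (p + 1 - j) * real c ^ j *
        euler_fun (p - j) z * euler_fun (j - 1) x)
    + euler_fun p (real a * z + real c * x))" for x z
  have Fx: "F (x + 1) z = - F x z" for x z
  proof -
    have q: "real a * z + real c * (x + 1) = (real a * z + real c * x) + real c" by (simp add: algebra_simps)
    have e: "euler_fun p (real a * z + real c * (x + 1)) = - euler_fun p (real a * z + real c * x)"
      unfolding q ef_shift_nat using c by simp
    show ?thesis unfolding F_def e S5_x S5_z[OF c a] ef_shift_1
      by (simp add: sum_negf algebra_simps)
  qed
  have Fz: "F x (z + 1) = - F x z" for x z
  proof -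
    have q: "real a * (z + 1) + real c * x = (real a * z + real c * x) + real a" by (simp add: algebra_simps)
    have e: "euler_fun p (real a * (z + 1) + real c * x) = - euler_fun p (real a * z + real c * x)"
      unfolding q ef_shift_nat using a by simp
    show ?thesis unfolding F_def e S5_x S5_z[OF a c] ef_shift_1
      by (simp add: sum_negf algebra_simps)
  qed
  have unit: "F x z = 0" if x0: "0 \<le> x" and x1: "x < 1" and z0: "0 \<le> z" and z1: "z < 1" for x z
  proof -
    define w where "w = real a * z + real c * x"
    have cr: "real c > 0" using \<open>c > 0\<close> by simp
    have s1: "real a * real c ^ p * S5 p a c x z = Psum a c n w + real a * z * euler_fun n w"
      unfolding p w_def by (rule S5_unit[OF a c cop z0 z1])
    have s2: "real c * real a ^ p * S5 p c a z x = Psum c a n w + real c * x * euler_fun n w"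
      using S5_unit[OF c a _ x0 x1, of n z] cop unfolding p w_def by (simp add: coprime_commute add.commute)
    have xw: "(w - real a * z) / real c = x" unfolding w_def using cr by simp
    have s3: "(\<Sum>j=1..p. real ((p - 1) choose (j - 1)) * real a ^ (p + 1 - j) * real c ^ j *
        euler_fun (p - j) z * euler_fun (j - 1) x) = Tpoly a c z n ((w - real a * z) / real c)"
      unfolding xw p by (rule sum_reindex_T[OF x0 x1 z0 z1])
    have "F x z = ee a c z n w"
      unfolding F_def s1 s2 s3 ee_def using p by (simp add: w_def algebra_simps)
    also have "\<dots> = 0"
    proof (rule ee_zero[OF a c cop z0 z1])
      show "0 \<le> w" unfolding w_def using x0 z0 by simp
      have "real a * z < real a" using z1 \<open>a > 0\<close> by simp
      moreover have "real c * x < real c" using x1 \<open>c > 0\<close> by simp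
      ultimately show "w < real a + real c" unfolding w_def by simp
    qed
    finally show ?thesis .
  qed
  have zfix: "F x z = 0" if z0: "0 \<le> z" and z1: "z < 1" for x z
    by (rule antiper_zero[of "\<lambda>x. F x z"]) (use Fx unit z0 z1 in auto)
  have "F x z = 0"
    by (rule antiper_zero[of "\<lambda>z. F x z"]) (use Fz zfix in auto)
  then show ?thesis unfolding F_def by simp
qed


end
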